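(* Let $\{e_j\}_{j=1}^d$ be an orthonormal basis of $\mathbb C^d$. There is a map $F:\mathbb R^{3d-2}\to\mathbb C^d$ (depending on the basis) such that the following holds. Let $m>0$, let $x\in\mathbb C^d\setminus\{0\}$ and $\epsilon\in\mathbb R^{3d-2}$ satisfy $|\langle x,e_j\rangle|^2-|\epsilon_j|\ge m\|x\|_\infty^2$ for all $j\in\{1,\dots,d\}$, and let $C=\frac{(1+\sqrt2)\|\epsilon\|_\infty+\|x\|_\infty^2}{m\|x\|_\infty^2}$. Then $y=(y_1,\dots,y_d)=F(\widetilde{\mathcal A}_{\{e_j\}}(x,\epsilon))$ satisfies, for all $k\in\{1,\dots,d\}$, $$\left|y_k-\frac{\overline{x_1}}{|x_1|}x_k\right|\le\left(\frac{2+\sqrt2}{m}\,\frac{1-C^{k-1}}{1-C}+\frac{C^{k-1}}{2\sqrt m}\right)\frac{\|\epsilon\|_\infty}{\|x\|_\infty}.$$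
   Context: $\mathbb C^d$ has the standard inner product $\langle u,v\rangle=\sum u_k\overline{v_k}$. Here $x_k=\langle x,e_k\rangle$ and $\|x\|_\infty=\max_k|x_k|$ (coordinates with respect to the basis), $\|\epsilon\|_\infty=\max_j|\epsilon_j|$. Measurement vectors: $f_j=e_j$ ($1\le j\le d$), $f_j=e_{j-d}-e_{j-d+1}$ ($d+1\le j\le 2d-1$), $f_j=e_{j-(2d-1)}-ie_{j-(2d-1)+1}$ ($2d\le j\le 3d-2$); noisy measurements $\widetilde{\mathcal A}_{\{e_j\}}(x,\epsilon)=(|\langle x,f_j\rangle|^2+\epsilon_j)_{j=1}^{3d-2}$. The expression $\frac{1-C^{k-1}}{1-C}$ denotes $\sum_{i=0}^{k-2}C^i$ (which equals the quotient when $C\ne1$). *)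

theory Defs
  imports Complex_Main
begin

text \<open>Vectors of C^d are represented as functions nat => complex, of which only the
  components with index in {1..d} are relevant. Vectors of R^(3d-2) are functions
  nat => real of which only the components with index in {1..3d-2} are relevant.\<close>

definition cinner :: "nat \<Rightarrow> (nat \<Rightarrow> complex) \<Rightarrow> (nat \<Rightarrow> complex) \<Rightarrow> complex" where
  "cinner d u v = (\<Sum>k=1..d. u k * cnj (v k))"

definition is_zero_vec :: "nat \<Rightarrow> (nat \<Rightarrow> complex) \<Rightarrow> bool" where
  "is_zero_vec d x \<longleftrightarrow> (\<forall>k\<in>{1..d}. x k = 0)"

definition orthonormal_basis :: "nat \<Rightarrow> (nat \<Rightarrow> nat \<Rightarrow> complex) \<Rightarrow> bool" where
  "orthonormal_basis d e \<longleftrightarrow>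
     (\<forall>i\<in>{1..d}. \<forall>j\<in>{1..d}. cinner d (e i) (e j) = (if i = j then 1 else 0)) \<and>
     (\<forall>v::nat \<Rightarrow> complex. \<exists>c::nat \<Rightarrow> complex. \<forall>l\<in>{1..d}. v l = (\<Sum>j=1..d. c j * e j l))"

definition coord :: "nat \<Rightarrow> (nat \<Rightarrow> nat \<Rightarrow> complex) \<Rightarrow> (nat \<Rightarrow> complex) \<Rightarrow> nat \<Rightarrow> complex" where
  "coord d e x k = cinner d x (e k)"

definition sup_norm_coord :: "nat \<Rightarrow> (nat \<Rightarrow> nat \<Rightarrow> complex) \<Rightarrow> (nat \<Rightarrow> complex) \<Rightarrow> real" where
  "sup_norm_coord d e x = Max ((\<lambda>k. cmod (coord d e x k)) ` {1..d})"

definition sup_norm_real :: "nat \<Rightarrow> (nat \<Rightarrow> real) \<Rightarrow> real" where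
  "sup_norm_real n eps = Max ((\<lambda>j. \<bar>eps j\<bar>) ` {1..n})"

definition meas_vec :: "nat \<Rightarrow> (nat \<Rightarrow> nat \<Rightarrow> complex) \<Rightarrow> nat \<Rightarrow> (nat \<Rightarrow> complex)" where
  "meas_vec d e j =
     (if j \<le> d then e j
      else if j \<le> 2*d - 1 then (\<lambda>l. e (j - d) l - e (j - d + 1) l)
      else (\<lambda>l. e (j - (2*d - 1)) l - \<i> * e (j - (2*d - 1) + 1) l))"

definition noisy_meas :: "nat \<Rightarrow> (nat \<Rightarrow> nat \<Rightarrow> complex) \<Rightarrow> (nat \<Rightarrow> complex) \<Rightarrow> (nat \<Rightarrow> real) \<Rightarrow> (nat \<Rightarrow> real)" where
  "noisy_meas d e x eps =
     (\<lambda>j. if j \<in> {1..3*d-2} then (cmod (cinner d x (meas_vec d e j)))^2 + eps j else 0)"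

end

theory Submission
  imports Defs
begin

lemma cm_diff: "(cmod (u - v))^2 = (cmod u)^2 + (cmod v)^2 - 2 * Re (u * cnj v)"
  unfolding cmod_power2 by (simp add: power2_eq_square algebra_simps)
lemma cm_isum: "(cmod (u + \<i> * v))^2 = (cmod u)^2 + (cmod v)^2 + 2 * Im (u * cnj v)"
  unfolding cmod_power2 by (simp add: power2_eq_square algebra_simps)

lemma step_bound:
  fixes a1 a2 v \<omega> \<eta> :: complex and b \<epsilon> M \<delta> m e C :: real
  assumes om: "cmod \<omega> = 1" and A1: "cmod a1 \<le> M" and A2: "cmod a2 \<le> M" and nz: "a1 \<noteq> 0"
    and bdef: "b = (cmod a1)^2 + \<epsilon>" and eps: "\<bar>\<epsilon>\<bar> \<le> \<delta>" and bm: "b \<ge> m*M^2" and mpos: "m>0" and Mpos: "M>0"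
    and eta: "cmod \<eta> \<le> (1+sqrt 2)*\<delta>" and ev: "cmod (v - \<omega>*a1) \<le> e"
    and Cdef: "C = ((1+sqrt 2)*\<delta> + M^2)/(m*M^2)"
  shows "cmod (cnj (a1 * cnj a2 + \<eta>) * v / complex_of_real b - \<omega>*a2) \<le> C*e + (2+sqrt 2)/m*\<delta>/M"
proof -
  define u where "u = \<omega>*a1"
  define z where "z = a1 * cnj a2"
  define r2 where "r2 = (cmod a1)^2"
  have r2pos: "r2 > 0" using nz by (simp add: r2_def)
  have bpos: "b > 0" using bm mpos Mpos by (smt (verit) mult_pos_pos zero_less_power)
  have d0: "\<delta> \<ge> 0" using eps by linarith
  have e0: "e \<ge> 0" using ev norm_ge_zero order_trans by blast
  have cc: "cnj a1 * a1 = complex_of_real r2" unfolding r2_def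
    by (metis complex_norm_square mult.commute)
  have tgt: "\<omega>*a2 = cnj z * u / complex_of_real r2"
    using r2pos cc unfolding z_def u_def
    by (simp add: field_simps)
  have decomp: "cnj (z + \<eta>) * v / complex_of_real b - cnj z * u / complex_of_real r2
      = cnj \<eta> * v / complex_of_real b + cnj z * (v - u) / complex_of_real b
        + cnj z * u * complex_of_real (r2 - b) / complex_of_real (b * r2)"
    using r2pos bpos by (simp add: field_simps)
  have cu: "cmod u \<le> M" using om A1 by (simp add: u_def norm_mult)
  have cv: "cmod v \<le> M + e"
    using ev cu norm_triangle_ineq2[of v u] unfolding u_def by linarith
  have cz: "cmod z \<le> M*M" unfolding z_def using A1 A2
    by (simp add: norm_mult mult_mono')
  have n1: "cmod (cnj \<eta> * v / complex_of_real b) \<le> (1+sqrt 2)*\<delta>*(M+e)/b"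
  proof -
    have "cmod (cnj \<eta> * v / complex_of_real b) = cmod \<eta> * cmod v / b"
      using bpos by (simp add: norm_mult norm_divide)
    also have "\<dots> \<le> (1+sqrt 2)*\<delta>*(M+e)/b"
      using eta cv bpos d0 by (intro divide_right_mono mult_mono) auto
    finally show ?thesis .
  qed
  have n2: "cmod (cnj z * (v - u) / complex_of_real b) \<le> M*M*e/b"
  proof -
    have "cmod (cnj z * (v - u) / complex_of_real b) = cmod z * cmod (v-u) / b"
      using bpos by (simp add: norm_mult norm_divide)
    also have "\<dots> \<le> M*M*e/b"
      using cz ev bpos Mpos unfolding u_def by (intro divide_right_mono mult_mono) auto
    finally show ?thesis .
  qed
  have n3: "cmod (cnj z * u * complex_of_real (r2 - b) / complex_of_real (b * r2)) \<le> M*\<delta>/b"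
  proof -
    have "cmod (cnj z * u * complex_of_real (r2 - b) / complex_of_real (b * r2))
        = cmod a2 * \<bar>\<epsilon>\<bar> / b"
    proof -
      have "cmod (cnj z * u * complex_of_real (r2 - b) / complex_of_real (b * r2))
          = cmod z * cmod u * \<bar>r2 - b\<bar> / (b * r2)"
        using bpos r2pos by (simp add: norm_mult norm_divide del: of_real_diff)
      also have "\<dots> = cmod a1 * cmod a2 * cmod a1 * \<bar>\<epsilon>\<bar> / (b * (cmod a1)^2)"
        unfolding z_def u_def r2_def bdef using om by (simp add: norm_mult)
      also have "\<dots> = cmod a2 * \<bar>\<epsilon>\<bar> / b"
        using nz bpos by (simp add: power2_eq_square field_simps)
      finally show ?thesis .
    qed
    also have "\<dots> \<le> M*\<delta>/b"
      using A2 eps bpos Mpos by (intro divide_right_mono mult_mono) auto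
    finally show ?thesis .
  qed
  have "cmod (cnj (z + \<eta>) * v / complex_of_real b - \<omega>*a2)
      \<le> (1+sqrt 2)*\<delta>*(M+e)/b + M*M*e/b + M*\<delta>/b"
    unfolding tgt decomp using n1 n2 n3 norm_triangle_le norm_triangle_ineq
    by (smt (verit))
  also have "\<dots> = ((1+sqrt 2)*\<delta>*(M+e) + M*M*e + M*\<delta>)/b" using bpos by (simp add: field_simps)
  also have "\<dots> \<le> ((1+sqrt 2)*\<delta>*(M+e) + M*M*e + M*\<delta>)/(m*M^2)"
    using bm bpos d0 e0 Mpos mpos by (intro divide_left_mono) (auto intro!: add_nonneg_nonneg mult_nonneg_nonneg)
  also have "\<dots> = C*e + (2+sqrt 2)/m*\<delta>/M"
    unfolding Cdef using mpos Mpos by (simp add: field_simps power2_eq_square)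
  finally show ?thesis unfolding z_def .
qed

definition ztil :: "nat \<Rightarrow> (nat \<Rightarrow> real) \<Rightarrow> nat \<Rightarrow> complex" where
  "ztil d b k = Complex ((b k + b (k+1) - b (d+k))/2) ((b (2*d-1+k) - b k - b (k+1))/2)"

fun wrec :: "nat \<Rightarrow> (nat \<Rightarrow> real) \<Rightarrow> nat \<Rightarrow> complex" where
  "wrec d b 0 = 0"
| "wrec d b (Suc 0) = complex_of_real (sqrt (b 1))"
| "wrec d b (Suc (Suc k)) = cnj (ztil d b (Suc k)) * wrec d b (Suc k) / complex_of_real (b (Suc k))"

definition Fmap :: "nat \<Rightarrow> (nat \<Rightarrow> nat \<Rightarrow> complex) \<Rightarrow> (nat \<Rightarrow> real) \<Rightarrow> (nat \<Rightarrow> complex)" where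
  "Fmap d e b = (\<lambda>l. \<Sum>j=1..d. wrec d b j * e j l)"

lemma coord_comb:
  assumes ob: "orthonormal_basis d e" and k: "k \<in> {1..d}"
  shows "coord d e (\<lambda>l. \<Sum>j=1..d. w j * e j l) k = w k"
proof -
  have "coord d e (\<lambda>l. \<Sum>j=1..d. w j * e j l) k = (\<Sum>l=1..d. \<Sum>j=1..d. w j * e j l * cnj (e k l))"
    unfolding coord_def cinner_def by (simp add: sum_distrib_right)
  also have "\<dots> = (\<Sum>j=1..d. w j * cinner d (e j) (e k))"
    unfolding cinner_def by (subst sum.swap) (simp add: sum_distrib_left mult.assoc)
  also have "\<dots> = (\<Sum>j=1..d. if j = k then w k else 0)"
    using ob k unfolding orthonormal_basis_def by (intro sum.cong) auto
  also have "\<dots> = w k" using k by simp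
  finally show ?thesis .
qed

lemma nonzero_coord:
  assumes ob: "orthonormal_basis d e" and nz: "\<not> is_zero_vec d x"
  shows "\<exists>k\<in>{1..d}. coord d e x k \<noteq> 0"
proof (rule ccontr)
  assume H: "\<not> (\<exists>k\<in>{1..d}. coord d e x k \<noteq> 0)"
  obtain c where c: "\<forall>l\<in>{1..d}. x l = (\<Sum>j=1..d. c j * e j l)"
    using ob unfolding orthonormal_basis_def by blast
  have "(\<Sum>l=1..d. x l * cnj (x l)) = (\<Sum>l=1..d. x l * cnj (\<Sum>j=1..d. c j * e j l))"
    using c by (intro sum.cong) auto
  also have "\<dots> = (\<Sum>j=1..d. cnj (c j) * coord d e x j)"
    unfolding coord_def cinner_def
    by (simp add: sum_distrib_left sum_distrib_right mult.commute mult.left_commute) (subst sum.swap, simp)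
  also have "\<dots> = 0" using H by simp
  finally have S: "(\<Sum>l=1..d. x l * cnj (x l)) = 0" .
  have xx: "\<And>l. x l * cnj (x l) = complex_of_real ((cmod (x l))^2)"
    by (metis complex_norm_square)
  have T: "(\<Sum>l=1..d. x l * cnj (x l)) = complex_of_real (\<Sum>l=1..d. (cmod (x l))^2)"
    unfolding xx of_real_sum ..
  from S T have "(\<Sum>l=1..d. (cmod (x l))^2) = 0" by (metis of_real_eq_0_iff)
  then have "\<forall>l\<in>{1..d}. (cmod (x l))^2 = 0"
    by (subst (asm) sum_nonneg_eq_0_iff) auto
  then have "is_zero_vec d x" unfolding is_zero_vec_def by simp
  with nz show False by simp
qed

lemma ztil_bound:
  fixes a1 a2 :: complex
  assumes "b k = (cmod a1)^2 + e1" "b (k+1) = (cmod a2)^2 + e2"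
    "b (d+k) = (cmod (a1 - a2))^2 + e3" "b (2*d-1+k) = (cmod (a1 + \<i>*a2))^2 + e4"
    "\<bar>e1\<bar> \<le> \<delta>" "\<bar>e2\<bar> \<le> \<delta>" "\<bar>e3\<bar> \<le> \<delta>" "\<bar>e4\<bar> \<le> \<delta>"
  shows "cmod (ztil d b k - a1 * cnj a2) \<le> (1 + sqrt 2) * \<delta>"
proof -
  have eq: "ztil d b k - a1 * cnj a2 = Complex ((e1+e2-e3)/2) ((e4-e1-e2)/2)"
    unfolding ztil_def assms(1-4) cm_diff cm_isum by (simp add: complex_eq_iff field_simps)
  have x2: "((e1+e2-e3)/2)^2 \<le> (3*\<delta>/2)^2"
    using assms(5-8) by (subst abs_le_square_iff[symmetric]) auto
  have y2: "((e4-e1-e2)/2)^2 \<le> (3*\<delta>/2)^2"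
    using assms(5-8) by (subst abs_le_square_iff[symmetric]) auto
  have d0: "\<delta> \<ge> 0" using assms(5) by linarith
  have s2: "sqrt 2 \<ge> 1" by simp
  have sq: "(sqrt 2)^2 = 2" by simp
  have "((e1+e2-e3)/2)^2 + ((e4-e1-e2)/2)^2 \<le> ((1 + sqrt 2) * \<delta>)^2"
  proof -
    have "((1 + sqrt 2) * \<delta>)^2 = (3 + 2*sqrt 2) * \<delta>^2"
      by (simp add: power2_eq_square algebra_simps)
    moreover have "(3 + 2*sqrt 2) * \<delta>^2 \<ge> 2 * (3*\<delta>/2)^2"
    proof -
      have "(3 + 2*sqrt 2) * \<delta>^2 - 2 * (3*\<delta>/2)^2 = (2*sqrt 2 - 3/2) * \<delta>^2"
        by (simp add: power2_eq_square algebra_simps)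
      moreover have "2*sqrt 2 - 3/2 \<ge> 0" using s2 by linarith
      then have "(2*sqrt 2 - 3/2) * \<delta>^2 \<ge> 0" by simp
      ultimately show ?thesis by linarith
    qed
    ultimately show ?thesis using x2 y2 by linarith
  qed
  then have "sqrt (((e1+e2-e3)/2)^2 + ((e4-e1-e2)/2)^2) \<le> (1 + sqrt 2) * \<delta>"
    using d0 by (intro real_le_lsqrt) auto
  then show ?thesis unfolding eq by (simp add: complex_norm)
qed

lemma base_bound:
  fixes r b1 \<epsilon> \<delta> m M :: real
  assumes "r \<ge> 0" "b1 = r^2 + \<epsilon>" "\<bar>\<epsilon>\<bar> \<le> \<delta>" "r^2 - \<bar>\<epsilon>\<bar> \<ge> m*M^2" "m > 0" "M > 0"
  shows "\<bar>sqrt b1 - r\<bar> \<le> \<delta> / (2 * sqrt m * M)"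
proof -
  have lo: "sqrt m * M > 0" using assms by simp
  have b1: "b1 \<ge> m*M^2" using assms by linarith
  have r2: "r^2 \<ge> m*M^2" using assms by linarith
  have "sqrt b1 \<ge> sqrt (m*M^2)" using b1 by simp
  then have s1: "sqrt b1 \<ge> sqrt m * M" using assms by (simp add: real_sqrt_mult)
  have "sqrt (r^2) \<ge> sqrt (m*M^2)" using r2 by (simp del: real_sqrt_abs)
  then have s2: "r \<ge> sqrt m * M" using assms by (simp add: real_sqrt_mult)
  have sb: "(sqrt b1)^2 = b1" using b1 lo assms by (smt (verit) real_sqrt_pow2 zero_le_mult_iff zero_le_power2)
  have "\<bar>sqrt b1 - r\<bar> * (sqrt b1 + r) = \<bar>(sqrt b1)^2 - r^2\<bar>"
  proof -
    have "sqrt b1 + r > 0" using s1 s2 lo by linarith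
    then have "\<bar>sqrt b1 - r\<bar> * (sqrt b1 + r) = \<bar>(sqrt b1 - r) * (sqrt b1 + r)\<bar>"
      by (simp add: abs_mult)
    also have "(sqrt b1 - r) * (sqrt b1 + r) = (sqrt b1)^2 - r^2"
      by (simp add: power2_eq_square algebra_simps)
    finally show ?thesis .
  qed
  also have "\<dots> = \<bar>\<epsilon>\<bar>" using sb assms by simp
  finally have eqn: "\<bar>sqrt b1 - r\<bar> * (sqrt b1 + r) = \<bar>\<epsilon>\<bar>" .
  have "\<bar>sqrt b1 - r\<bar> * (2 * sqrt m * M) \<le> \<bar>sqrt b1 - r\<bar> * (sqrt b1 + r)"
    using s1 s2 by (intro mult_left_mono) auto
  then have "\<bar>sqrt b1 - r\<bar> * (2 * sqrt m * M) \<le> \<delta>" using eqn assms by linarith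
  then show ?thesis using lo by (simp add: field_simps)
qed


lemma E_rec:
  fixes C A B D M :: real
  shows "(A * (\<Sum>i<Suc n. C^i) + C^(Suc n) / B) * D / M
       = C * ((A * (\<Sum>i<n. C^i) + C^n / B) * D / M) + A * D / M"
proof -
  have "(\<Sum>i<Suc n. C^i) = 1 + C * (\<Sum>i<n. C^i)"
    by (simp only: sum.lessThan_Suc_shift power_Suc sum_distrib_left[symmetric] power_0)
  then show ?thesis by (simp add: algebra_simps add_divide_distrib)
qed




theorem mainTheorem9:
  fixes d :: nat and e :: "nat \<Rightarrow> nat \<Rightarrow> complex"
  assumes "orthonormal_basis d e"
  shows "\<exists>F :: (nat \<Rightarrow> real) \<Rightarrow> (nat \<Rightarrow> complex).
    \<forall>(m::real) (x::nat \<Rightarrow> complex) (eps::nat \<Rightarrow> real).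
      m > 0 \<longrightarrow> \<not> is_zero_vec d x \<longrightarrow>
      (\<forall>j\<in>{1..d}. (cmod (coord d e x j))^2 - \<bar>eps j\<bar> \<ge> m * (sup_norm_coord d e x)^2) \<longrightarrow>
      (let C = ((1 + sqrt 2) * sup_norm_real (3*d-2) eps + (sup_norm_coord d e x)^2)
               / (m * (sup_norm_coord d e x)^2);
           y = F (noisy_meas d e x eps)
       in \<forall>k\<in>{1..d}.
            cmod (coord d e y k - (cnj (coord d e x 1) / complex_of_real (cmod (coord d e x 1))) * coord d e x k)
            \<le> ((2 + sqrt 2) / m * (\<Sum>i<k-1. C^i) + C^(k-1) / (2 * sqrt m))
               * sup_norm_real (3*d-2) eps / sup_norm_coord d e x)"
    proof (rule exI[of _ "Fmap d e"], intro allI impI)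
  fix m :: real and x :: "nat \<Rightarrow> complex" and eps :: "nat \<Rightarrow> real"
  assume mpos: "m > 0" and nz: "\<not> is_zero_vec d x"
    and hyp: "\<forall>j\<in>{1..d}. (cmod (coord d e x j))^2 - \<bar>eps j\<bar> \<ge> m * (sup_norm_coord d e x)^2"
  define a where "a = coord d e x"
  define M where "M = sup_norm_coord d e x"
  define \<delta> where "\<delta> = sup_norm_real (3*d-2) eps"
  define b where "b = noisy_meas d e x eps"
  define C where "C = ((1 + sqrt 2) * \<delta> + M^2) / (m * M^2)"
  define \<omega> where "\<omega> = cnj (a 1) / complex_of_real (cmod (a 1))"
  define E where "E = (\<lambda>k::nat. ((2 + sqrt 2) / m * (\<Sum>i<k-1. C^i) + C^(k-1) / (2 * sqrt m)) * \<delta> / M)"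
  have main: "\<forall>k\<in>{1..d}. cmod (coord d e (Fmap d e b) k - \<omega> * a k) \<le> E k"
  proof (cases "d = 0")
    case True then show ?thesis by simp
  next
    case False
    then have d1: "d \<ge> 1" by simp
    have aM: "\<forall>j\<in>{1..d}. cmod (a j) \<le> M"
      unfolding M_def sup_norm_coord_def a_def by (intro ballI Max_ge) auto
    have epsd: "\<forall>j\<in>{1..3*d-2}. \<bar>eps j\<bar> \<le> \<delta>"
      unfolding \<delta>_def sup_norm_real_def by (intro ballI Max_ge) auto
    obtain j0 where j0: "j0 \<in> {1..d}" "a j0 \<noteq> 0"
      using nonzero_coord[OF assms nz] unfolding a_def by blast
    have Mpos: "M > 0" using aM j0 by (smt (verit) zero_less_norm_iff)
    have hyp': "\<forall>j\<in>{1..d}. (cmod (a j))^2 - \<bar>eps j\<bar> \<ge> m*M^2"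
      using hyp unfolding a_def M_def by simp
    have mM: "m*M^2 > 0" using mpos Mpos by simp
    have anz: "\<forall>j\<in>{1..d}. a j \<noteq> 0"
    proof
      fix j assume "j \<in> {1..d}"
      then have "(cmod (a j))^2 > 0" using hyp' mM by (smt (verit) abs_ge_zero)
      then show "a j \<noteq> 0" by auto
    qed
    have bj: "\<forall>j\<in>{1..d}. b j = (cmod (a j))^2 + eps j"
    proof
      fix j assume j: "j \<in> {1..d}"
      then have "j \<in> {1..3*d-2}" by auto
      then show "b j = (cmod (a j))^2 + eps j"
        using j unfolding b_def noisy_meas_def meas_vec_def a_def coord_def by simp
    qed
    have bm: "\<forall>j\<in>{1..d}. b j \<ge> m*M^2" using bj hyp' by (smt (verit) abs_ge_self)
    have bdk: "b (d+k) = (cmod (a k - a (k+1)))^2 + eps (d+k)" if "1 \<le> k" "k+1 \<le> d" for k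
    proof -
      have "d+k \<in> {1..3*d-2}" using that by auto
      moreover have "meas_vec d e (d+k) = (\<lambda>l. e k l - e (k+1) l)"
        using that unfolding meas_vec_def by auto
      moreover have "cinner d x (\<lambda>l. e k l - e (k+1) l) = a k - a (k+1)"
        unfolding cinner_def a_def coord_def by (simp add: sum_subtractf right_diff_distrib)
      ultimately show ?thesis unfolding b_def noisy_meas_def by simp
    qed
    have bqk: "b (2*d-1+k) = (cmod (a k + \<i> * a (k+1)))^2 + eps (2*d-1+k)" if "1 \<le> k" "k+1 \<le> d" for k
    proof -
      have "2*d-1+k \<in> {1..3*d-2}" using that by auto
      moreover have "meas_vec d e (2*d-1+k) = (\<lambda>l. e k l - \<i> * e (k+1) l)"
        using that unfolding meas_vec_def by auto
      moreover have "cinner d x (\<lambda>l. e k l - \<i> * e (k+1) l) = a k + \<i> * a (k+1)"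
        unfolding cinner_def a_def coord_def by (simp add: sum.distrib sum_distrib_left algebra_simps)
      ultimately show ?thesis unfolding b_def noisy_meas_def by simp
    qed
    have zt: "cmod (ztil d b k - a k * cnj (a (k+1))) \<le> (1 + sqrt 2) * \<delta>" if "1 \<le> k" "k+1 \<le> d" for k
    proof (rule ztil_bound)
      show "b k = (cmod (a k))^2 + eps k" using bj that by auto
      show "b (k+1) = (cmod (a (k+1)))^2 + eps (k+1)" using bj that by auto
      show "b (d+k) = (cmod (a k - a (k+1)))^2 + eps (d+k)" using bdk that by auto
      show "b (2*d-1+k) = (cmod (a k + \<i> * a (k+1)))^2 + eps (2*d-1+k)" using bqk that by auto
      show "\<bar>eps k\<bar> \<le> \<delta>" using epsd that by auto
      show "\<bar>eps (k+1)\<bar> \<le> \<delta>" using epsd that by auto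
      show "\<bar>eps (d+k)\<bar> \<le> \<delta>" using epsd that by auto
      have "2*d-1+k \<in> {1..3*d-2}" using that by auto
      then show "\<bar>eps (2*d-1+k)\<bar> \<le> \<delta>" using epsd by blast
    qed
    have a1: "a 1 \<noteq> 0" using anz d1 by auto
    have om: "cmod \<omega> = 1" using a1 unfolding \<omega>_def by (simp add: norm_divide)
    have oma1: "\<omega> * a 1 = complex_of_real (cmod (a 1))"
    proof -
      have "cnj (a 1) * a 1 = complex_of_real (cmod (a 1)) * complex_of_real (cmod (a 1))"
        by (metis complex_norm_square mult.commute of_real_mult power2_eq_square)
      then show ?thesis using a1 unfolding \<omega>_def by (simp add: field_simps)
    qed
    have ind: "cmod (wrec d b k - \<omega> * a k) \<le> E k" if "1 \<le> k" "k \<le> d" for k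
      using that
    proof (induction k)
      case 0 then show ?case by simp
    next
      case (Suc n)
      show ?case
      proof (cases n)
        case 0
        have "cmod (wrec d b (Suc n) - \<omega> * a (Suc n)) = \<bar>sqrt (b 1) - cmod (a 1)\<bar>"
          using 0 oma1 by (simp del: of_real_diff add: of_real_diff[symmetric])
        also have "\<dots> \<le> \<delta> / (2 * sqrt m * M)"
          using bj hyp' epsd d1 mpos Mpos by (intro base_bound) auto
        also have "\<dots> = E (Suc n)" unfolding E_def using 0 by simp
        finally show ?thesis .
      next
        case (Suc n')
        have n1: "1 \<le> n" "n + 1 \<le> d" using Suc.prems Suc by auto
        have IH: "cmod (wrec d b n - \<omega> * a n) \<le> E n" using Suc.IH n1 by simp
        have wr: "wrec d b (Suc n) = cnj (a n * cnj (a (Suc n)) + (ztil d b n - a n * cnj (a (Suc n))))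
              * wrec d b n / complex_of_real (b n)"
          using Suc by simp
        have "cmod (wrec d b (Suc n) - \<omega> * a (Suc n)) \<le> C * E n + (2 + sqrt 2)/m*\<delta>/M"
          unfolding wr
        proof (rule step_bound[OF om])
          show "cmod (a n) \<le> M" "cmod (a (Suc n)) \<le> M" using aM n1 by auto
          show "a n \<noteq> 0" using anz n1 by auto
          show "b n = (cmod (a n))^2 + eps n" using bj n1 by auto
          show "\<bar>eps n\<bar> \<le> \<delta>" using epsd n1 by auto
          show "b n \<ge> m*M^2" using bm n1 by auto
          show "m > 0" "M > 0" using mpos Mpos by auto
          show "cmod (ztil d b n - a n * cnj (a (Suc n))) \<le> (1 + sqrt 2) * \<delta>" using zt n1 by simp
          show "cmod (wrec d b n - \<omega> * a n) \<le> E n" by (rule IH)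
          show "C = ((1 + sqrt 2) * \<delta> + M^2) / (m * M^2)" by (rule C_def)
        qed
        also have "\<dots> = E (Suc n)"
          unfolding E_def using Suc E_rec[where A="(2 + sqrt 2)/m" and n=n' and C=C and B="2 * sqrt m" and D=\<delta> and M=M] by simp
        finally show ?thesis .
      qed
    qed
    show ?thesis
    proof
      fix k assume k: "k \<in> {1..d}"
      have "coord d e (Fmap d e b) k = wrec d b k"
        unfolding Fmap_def using coord_comb[OF assms k] .
      then show "cmod (coord d e (Fmap d e b) k - \<omega> * a k) \<le> E k" using ind k by auto
    qed
  qed
  then show "let C = ((1 + sqrt 2) * sup_norm_real (3*d-2) eps + (sup_norm_coord d e x)^2)
               / (m * (sup_norm_coord d e x)^2);
           y = Fmap d e (noisy_meas d e x eps)
       in \<forall>k\<in>{1..d}.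
            cmod (coord d e y k - (cnj (coord d e x 1) / complex_of_real (cmod (coord d e x 1))) * coord d e x k)
            \<le> ((2 + sqrt 2) / m * (\<Sum>i<k-1. C^i) + C^(k-1) / (2 * sqrt m))
               * sup_norm_real (3*d-2) eps / sup_norm_coord d e x"
    unfolding Let_def a_def M_def \<delta>_def b_def C_def \<omega>_def E_def by simp
qed

end
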